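(* In the algorithm setup, let $R(\mathbf z^L)\in\{\pm1\}^V$ be the randomized rounding of $\mathbf z^L=(z^L_i)_{i\in V}$. Then there is a constant $C$, independent of $n=|V|$, such that for all $t\ge0$, $$\mathbb P\Big(\Big|\frac1{\alpha n}\sum_{a\in E}\big(f(R(\mathbf z^L)_{\partial a})-\mathbb E[f(R(\mathbf z^L)_{\partial a})]\big)\Big|\ge t\Big)\le C e^{-nt^2/(2C)},$$ where $\alpha=d/r$, the probability being over the Gaussians $z^0$ and the rounding.
   Context: Algorithm setup. Fix $r\ge2$ and a predicate $f:\{\pm1\}^r\to\{0,1\}$, identified with its multilinear extension $f(x)=\sum_{S\subseteq[r]}\hat f(S)\prod_{\iota\in S}x_\iota$ on $\mathbb R^r$, and assume $\hat f(S)=0$ whenever $|S|=1$. Fix $\delta>0$ and let $L=\lfloor1/\delta\rfloor$. Let $G=(V,E)$ be a hypergraph whose hyperedges (factors) $a$ are ordered $r$-tuples $\partial a=(v_{a,1},\dots,v_{a,r})$ of distinct vertices (variables), which is $d$-index-regular: every variable lies in exactly $d$ factors, and for each $\iota\in[r]$ it is the $\iota$-th entry of exactly $d/r$ factors. Write $\partial i$ for the set of factors containing $i$. Assume the bipartite variable–factor incidence graph (factor graph) of $G$ has no cycle of length less than $4L+4$. For a factor $a$ and $j\in\partial a$, $\mathsf D_{j;a}f$ is the partial derivative of (multilinear) $f$ in the coordinate $\iota$ with $v_{a,\iota}=j$. Fix $K>0$ and functions $F_{\to,\ell},F_\ell:\mathbb R^\ell\to[-K,K]$ for $0\le\ell\le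 L-1$ (constants when $\ell=0$). Randomness: $z_i^0$, $i\in V$, i.i.d. $\mathcal N(0,\delta)$; set $z^0_{i\to a}=z_i^0$, $w_i^0=w^0_{i\to a}=0$. For $\ell=0,\dots,L-1$: $A^\ell_{i\to a}=F_{\to,\ell}(u^1_{i\to a},\dots,u^\ell_{i\to a})$, $A^\ell_i=F_\ell(u^1_i,\dots,u^\ell_i)$; with $\mathbf z^\ell_{\partial b\to b}=(z^\ell_{v_{b,1}\to b},\dots,z^\ell_{v_{b,r}\to b})$, $w^{\ell+1}_{i\to a}=(d-1)^{-1/2}\sum_{b\in\partial i\setminus a}\mathsf D_{i;b}f(\mathbf z^\ell_{\partial b\to b})$, $u^{\ell+1}_{i\to a}=w^{\ell+1}_{i\to a}-w^\ell_{i\to a}$, $z^{\ell+1}_{i\to a}=z_i^0+\sum_{s=1}^{\ell+1}A^{s-1}_{i\to a}u^s_{i\to a}$; $w^{\ell+1}_i=d^{-1/2}\sum_{b\in\partial i}\mathsf D_{i;b}f(\mathbf z^\ell_{\partial b\to b})$, $u^{\ell+1}_i=w^{\ell+1}_i-w^\ell_i$, $z^{\ell+1}_i=z_i^0+\sum_{s=1}^{\ell+1}A^{s-1}_iu^s_i$. Rounding: $\mathrm{trnc}(x)=\max(-1,\min(1,x))$; $R$ acts independently on each vertex, setting $R(\mathbf z^L)_i=+1$ with probability $(1+\mathrm{trnc}(z^L_i))/2$ and $-1$ otherwise; $R(\mathbf z^L)_{\partial a}$ is the restriction to the ordered tuple $\partial a$. *)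

theory Defs
  imports "HOL-Probability.Probability"
begin

(* Conventions: vertices are {..<n}, factors are {..<m}; factor a has ordered
   tuple (edge a 0, ..., edge a (r-1)) (positions 0-based).
   Points of R^r / {+-1}^r are functions nat => real that vanish for indices >= r. *)

definition pm_cube :: "nat \<Rightarrow> (nat \<Rightarrow> real) set" where
  "pm_cube r = {x. (\<forall>\<iota><r. x \<iota> = 1 \<or> x \<iota> = -1) \<and> (\<forall>\<iota>. r \<le> \<iota> \<longrightarrow> x \<iota> = 0)}"

definition fourier_coeff :: "nat \<Rightarrow> ((nat \<Rightarrow> real) \<Rightarrow> real) \<Rightarrow> nat set \<Rightarrow> real" where
  "fourier_coeff r f S = (\<Sum>x\<in>pm_cube r. f x * (\<Prod>\<iota>\<in>S. x \<iota>)) / 2 ^ r"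

definition mlext :: "nat \<Rightarrow> ((nat \<Rightarrow> real) \<Rightarrow> real) \<Rightarrow> (nat \<Rightarrow> real) \<Rightarrow> real" where
  "mlext r f y = (\<Sum>S\<in>Pow {..<r}. fourier_coeff r f S * (\<Prod>\<iota>\<in>S. y \<iota>))"

definition pderiv_ml :: "nat \<Rightarrow> ((nat \<Rightarrow> real) \<Rightarrow> real) \<Rightarrow> nat \<Rightarrow> (nat \<Rightarrow> real) \<Rightarrow> real" where
  "pderiv_ml r f \<iota> y = deriv (\<lambda>s. mlext r f (y(\<iota> := s))) (y \<iota>)"

definition Dfac :: "nat \<Rightarrow> ((nat \<Rightarrow> real) \<Rightarrow> real) \<Rightarrow> (nat \<Rightarrow> nat \<Rightarrow> nat) \<Rightarrow> nat \<Rightarrow> nat \<Rightarrow> (nat \<Rightarrow> real) \<Rightarrow> real" where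
  "Dfac r f edge a j y = pderiv_ml r f (THE \<iota>. \<iota> < r \<and> edge a \<iota> = j) y"

definition nbr_factors :: "nat \<Rightarrow> nat \<Rightarrow> (nat \<Rightarrow> nat \<Rightarrow> nat) \<Rightarrow> nat \<Rightarrow> nat set" where
  "nbr_factors r m edge i = {b. b < m \<and> i \<in> edge b ` {..<r}}"

definition index_regular :: "nat \<Rightarrow> nat \<Rightarrow> nat \<Rightarrow> nat \<Rightarrow> (nat \<Rightarrow> nat \<Rightarrow> nat) \<Rightarrow> bool" where
  "index_regular r d n m edge \<longleftrightarrow>
     (\<forall>a<m. inj_on (edge a) {..<r} \<and> edge a ` {..<r} \<subseteq> {..<n}) \<and>
     r dvd d \<and>
     (\<forall>i<n. card (nbr_factors r m edge i) = d) \<and>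
     (\<forall>i<n. \<forall>\<iota><r. card {a. a < m \<and> edge a \<iota> = i} = d div r)"

(* a cycle of length 2k in the bipartite variable-factor incidence graph *)
definition fg_cycle :: "nat \<Rightarrow> nat \<Rightarrow> nat \<Rightarrow> (nat \<Rightarrow> nat \<Rightarrow> nat) \<Rightarrow> nat \<Rightarrow> (nat \<Rightarrow> nat) \<Rightarrow> (nat \<Rightarrow> nat) \<Rightarrow> bool" where
  "fg_cycle r n m edge k vs fs \<longleftrightarrow>
     2 \<le> k \<and> inj_on vs {..<k} \<and> inj_on fs {..<k} \<and>
     (\<forall>j<k. vs j < n \<and> fs j < m \<and> vs j \<in> edge (fs j) ` {..<r}
            \<and> vs (Suc j mod k) \<in> edge (fs j) ` {..<r})"

definition fg_girth_ge :: "nat \<Rightarrow> nat \<Rightarrow> nat \<Rightarrow> (nat \<Rightarrow> nat \<Rightarrow> nat) \<Rightarrow> nat \<Rightarrow> bool" where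
  "fg_girth_ge r n m edge g \<longleftrightarrow> (\<forall>k vs fs. fg_cycle r n m edge k vs fs \<longrightarrow> g \<le> 2 * k)"

(* z-value computed from a history w of w's:
   z^l = z0 + sum_{s=1}^l F_{s-1}(u^1,...,u^{s-1}) u^s,  u^s = w^s - w^(s-1);
   the argument (u^1..u^{s-1}) in R^{s-1} is the extensional function on {..<s-1} *)
definition z_of :: "(nat \<Rightarrow> (nat \<Rightarrow> real) \<Rightarrow> real) \<Rightarrow> real \<Rightarrow> (nat \<Rightarrow> real) \<Rightarrow> nat \<Rightarrow> real" where
  "z_of Fs z0 w l = z0 + (\<Sum>s\<in>{1..l}. Fs (s - 1) (\<lambda>q\<in>{..<s - 1}. w (Suc q) - w q) * (w s - w (s - 1)))"

definition msg_tuple :: "nat \<Rightarrow> (nat \<Rightarrow> nat \<Rightarrow> nat) \<Rightarrow> (nat \<Rightarrow> (nat \<Rightarrow> real) \<Rightarrow> real) \<Rightarrow> (nat \<Rightarrow> real)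
     \<Rightarrow> (nat \<Rightarrow> nat \<Rightarrow> nat \<Rightarrow> real) \<Rightarrow> nat \<Rightarrow> nat \<Rightarrow> (nat \<Rightarrow> real)" where
  "msg_tuple r edge Fto z0 w l b =
     (\<lambda>\<iota>. if \<iota> < r then z_of Fto (z0 (edge b \<iota>)) (\<lambda>s. w s (edge b \<iota>) b) l else 0)"

(* w^{l+1}_{i->a} computed from the history w (w s i a = w^s_{i->a}) *)
definition msg_update :: "nat \<Rightarrow> ((nat \<Rightarrow> real) \<Rightarrow> real) \<Rightarrow> nat \<Rightarrow> (nat \<Rightarrow> nat \<Rightarrow> nat) \<Rightarrow> nat
     \<Rightarrow> (nat \<Rightarrow> (nat \<Rightarrow> real) \<Rightarrow> real) \<Rightarrow> (nat \<Rightarrow> real) \<Rightarrow> (nat \<Rightarrow> nat \<Rightarrow> nat \<Rightarrow> real) \<Rightarrow> nat \<Rightarrow> nat \<Rightarrow> nat \<Rightarrow> real" where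
  "msg_update r f m edge d Fto z0 w l i a =
     (\<Sum>b\<in>nbr_factors r m edge i - {a}. Dfac r f edge b i (msg_tuple r edge Fto z0 w l b)) / sqrt (real d - 1)"

(* wmsg ... l s i a = w^s_{i->a}, valid for s <= l *)
primrec wmsg :: "nat \<Rightarrow> ((nat \<Rightarrow> real) \<Rightarrow> real) \<Rightarrow> nat \<Rightarrow> (nat \<Rightarrow> nat \<Rightarrow> nat) \<Rightarrow> nat
     \<Rightarrow> (nat \<Rightarrow> (nat \<Rightarrow> real) \<Rightarrow> real) \<Rightarrow> (nat \<Rightarrow> real) \<Rightarrow> nat \<Rightarrow> nat \<Rightarrow> nat \<Rightarrow> nat \<Rightarrow> real" where
  "wmsg r f m edge d Fto z0 0 = (\<lambda>s i a. 0)"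
| "wmsg r f m edge d Fto z0 (Suc l) =
     (\<lambda>s i a. if s \<le> l then wmsg r f m edge d Fto z0 l s i a
              else msg_update r f m edge d Fto z0 (wmsg r f m edge d Fto z0 l) l i a)"

definition wvert :: "nat \<Rightarrow> ((nat \<Rightarrow> real) \<Rightarrow> real) \<Rightarrow> nat \<Rightarrow> (nat \<Rightarrow> nat \<Rightarrow> nat) \<Rightarrow> nat
     \<Rightarrow> (nat \<Rightarrow> (nat \<Rightarrow> real) \<Rightarrow> real) \<Rightarrow> (nat \<Rightarrow> real) \<Rightarrow> nat \<Rightarrow> nat \<Rightarrow> nat \<Rightarrow> real" where
  "wvert r f m edge d Fto z0 L s i =
     (if s = 0 then 0 else
      (\<Sum>b\<in>nbr_factors r m edge i.
          Dfac r f edge b i (msg_tuple r edge Fto z0 (wmsg r f m edge d Fto z0 L) (s - 1) b)) / sqrt (real d))"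

definition zfinal :: "nat \<Rightarrow> ((nat \<Rightarrow> real) \<Rightarrow> real) \<Rightarrow> nat \<Rightarrow> (nat \<Rightarrow> nat \<Rightarrow> nat) \<Rightarrow> nat
     \<Rightarrow> (nat \<Rightarrow> (nat \<Rightarrow> real) \<Rightarrow> real) \<Rightarrow> (nat \<Rightarrow> (nat \<Rightarrow> real) \<Rightarrow> real) \<Rightarrow> (nat \<Rightarrow> real) \<Rightarrow> nat \<Rightarrow> nat \<Rightarrow> real" where
  "zfinal r f m edge d Fto F z0 L i = z_of F (z0 i) (\<lambda>s. wvert r f m edge d Fto z0 L s i) L"

definition trnc :: "real \<Rightarrow> real" where
  "trnc x = max (-1) (min 1 x)"

(* randomized rounding realised with independent uniforms U_i on [0,1]:
   R_i = +1 iff U_i <= (1 + trnc z_i)/2, so P(R_i = 1 | z) = (1 + trnc z_i)/2 *)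
definition round_R :: "(nat \<Rightarrow> real) \<Rightarrow> (nat \<Rightarrow> real) \<Rightarrow> nat \<Rightarrow> real" where
  "round_R z U i = (if U i \<le> (1 + trnc (z i)) / 2 then 1 else -1)"

definition alg_space :: "real \<Rightarrow> nat \<Rightarrow> ((nat \<Rightarrow> real) \<times> (nat \<Rightarrow> real)) measure" where
  "alg_space \<delta> n =
     (PiM {..<n} (\<lambda>_. density lborel (normal_density 0 (sqrt \<delta>))))
     \<Otimes>\<^sub>M (PiM {..<n} (\<lambda>_. uniform_measure lborel {0..1}))"

definition factor_value :: "nat \<Rightarrow> ((nat \<Rightarrow> real) \<Rightarrow> real) \<Rightarrow> nat \<Rightarrow> (nat \<Rightarrow> nat \<Rightarrow> nat) \<Rightarrow> nat
     \<Rightarrow> (nat \<Rightarrow> (nat \<Rightarrow> real) \<Rightarrow> real) \<Rightarrow> (nat \<Rightarrow> (nat \<Rightarrow> real) \<Rightarrow> real) \<Rightarrow> nat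
     \<Rightarrow> (nat \<Rightarrow> real) \<times> (nat \<Rightarrow> real) \<Rightarrow> nat \<Rightarrow> real" where
  "factor_value r f m edge d Fto F L \<omega> a =
     f (\<lambda>\<iota>. if \<iota> < r
            then round_R (\<lambda>i. zfinal r f m edge d Fto F (fst \<omega>) L i) (snd \<omega>) (edge a \<iota>)
            else 0)"

end

theory Submission
  imports Defs
begin


definition nbv :: "nat \<Rightarrow> nat \<Rightarrow> (nat\<Rightarrow>nat\<Rightarrow>nat) \<Rightarrow> nat \<Rightarrow> nat set" where
  "nbv r m edge u = insert u (\<Union>b\<in>nbr_factors r m edge u. edge b ` {..<r})"

fun fball :: "nat \<Rightarrow> nat \<Rightarrow> (nat\<Rightarrow>nat\<Rightarrow>nat) \<Rightarrow> nat \<Rightarrow> nat \<Rightarrow> nat set" where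
  "fball r m edge 0 v = {v}"
| "fball r m edge (Suc k) v = (\<Union>u\<in>fball r m edge k v. nbv r m edge u)"

lemma ball_comp: "fball r m edge (j + k) x = (\<Union>u\<in>fball r m edge j x. fball r m edge k u)"
  by (induction k) auto

lemma ball_Suc': "fball r m edge (Suc k) x = (\<Union>u\<in>nbv r m edge x. fball r m edge k u)"
  using ball_comp[of r m edge 1 k x] by simp

lemma self_in_ball: "x \<in> fball r m edge k x"
  by (induction k) (auto simp: nbv_def)

lemma ball_mono_Suc: "fball r m edge k x \<subseteq> fball r m edge (Suc k) x"
  by (auto simp: nbv_def)

lemma ball_mono: "k \<le> k' \<Longrightarrow> fball r m edge k x \<subseteq> fball r m edge k' x"
  using ball_comp[of r m edge k "k'-k" x] self_in_ball[of _ r m edge "k'-k"] by auto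

lemma nbv_sym: "w \<in> nbv r m edge u \<Longrightarrow> u \<in> nbv r m edge w"
  by (auto simp: nbv_def nbr_factors_def)

lemma ball_sym: "u \<in> fball r m edge k v \<Longrightarrow> v \<in> fball r m edge k u"
proof (induction k arbitrary: u)
  case 0 then show ?case by simp
next
  case (Suc k)
  then obtain w where w: "w \<in> fball r m edge k v" "u \<in> nbv r m edge w" by auto
  have "v \<in> fball r m edge k w" using Suc.IH w(1) .
  moreover have "w \<in> nbv r m edge u" using nbv_sym w(2) .
  ultimately show ?case unfolding ball_Suc' by blast
qed

lemma ball_meet: "u \<in> fball r m edge k x \<Longrightarrow> u \<in> fball r m edge k y \<Longrightarrow> y \<in> fball r m edge (k + k) x"
  using ball_comp[of r m edge k k x] ball_sym[of u r m edge k y] by auto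



lemma nbv_edge: "b \<in> nbr_factors r m edge i \<Longrightarrow> \<iota> < r \<Longrightarrow> edge b \<iota> \<in> nbv r m edge i"
  by (auto simp: nbv_def)

lemma msg_tuple_local:
  assumes "\<And>\<iota>. \<iota> < r \<Longrightarrow> z (edge b \<iota>) = z' (edge b \<iota>)"
    and "\<And>\<iota> s. \<iota> < r \<Longrightarrow> w s (edge b \<iota>) b = w' s (edge b \<iota>) b"
  shows "msg_tuple r edge Fto z w l b = msg_tuple r edge Fto z' w' l b"
  using assms by (auto simp: msg_tuple_def fun_eq_iff)

lemma wmsg_local:
  "(\<forall>x\<in>fball r m edge l i. z x = z' x) \<Longrightarrow>
   wmsg r f m edge d Fto z l s i a = wmsg r f m edge d Fto z' l s i a"
proof (induction l arbitrary: s i a)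
  case 0 then show ?case by simp
next
  case (Suc l)
  have sub: "fball r m edge l i \<subseteq> fball r m edge (Suc l) i" by (rule ball_mono_Suc)
  show ?case
  proof (cases "s \<le> l")
    case True
    have "\<forall>x\<in>fball r m edge l i. z x = z' x" using Suc.prems sub by blast
    then show ?thesis using True Suc.IH by (simp del: fball.simps)
  next
    case False
    have "msg_update r f m edge d Fto z (wmsg r f m edge d Fto z l) l i a =
          msg_update r f m edge d Fto z' (wmsg r f m edge d Fto z' l) l i a"
      unfolding msg_update_def
    proof (intro arg_cong2[where f="(/)"] sum.cong refl arg_cong[where f="Dfac r f edge _ i"] msg_tuple_local)
      fix b \<iota> s assume b: "b \<in> nbr_factors r m edge i - {a}" and i: "\<iota> < r"
      have e: "edge b \<iota> \<in> nbv r m edge i" using b i nbv_edge by auto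
      have "i \<in> fball r m edge l i" by (rule self_in_ball)
      then have "edge b \<iota> \<in> fball r m edge (Suc l) i" using e by auto
      then show "z (edge b \<iota>) = z' (edge b \<iota>)" using Suc.prems by auto
      have "fball r m edge l (edge b \<iota>) \<subseteq> fball r m edge (Suc l) i"
        unfolding ball_Suc'[of r m edge l i] using e by auto
      then show "wmsg r f m edge d Fto z l s (edge b \<iota>) b = wmsg r f m edge d Fto z' l s (edge b \<iota>) b"
        using Suc.IH Suc.prems by (meson subsetD)
    qed
    then show ?thesis using False by simp
  qed
qed

lemma wvert_local:
  "(\<forall>x\<in>fball r m edge (Suc L) i. z x = z' x) \<Longrightarrow>
   wvert r f m edge d Fto z L s i = wvert r f m edge d Fto z' L s i"
  unfolding wvert_def
proof (intro if_cong refl arg_cong2[where f="(/)"] sum.cong arg_cong[where f="Dfac r f edge _ i"] msg_tuple_local)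
  fix b \<iota> s' assume A: "\<forall>x\<in>fball r m edge (Suc L) i. z x = z' x"
    and b: "b \<in> nbr_factors r m edge i" and i: "\<iota> < r"
  have e: "edge b \<iota> \<in> nbv r m edge i" using b i nbv_edge by auto
  have "i \<in> fball r m edge L i" by (rule self_in_ball)
  then have "edge b \<iota> \<in> fball r m edge (Suc L) i" using e by auto
  then show "z (edge b \<iota>) = z' (edge b \<iota>)" using A by auto
  have "fball r m edge L (edge b \<iota>) \<subseteq> fball r m edge (Suc L) i"
    unfolding ball_Suc'[of r m edge L i] using e by auto
  then show "wmsg r f m edge d Fto z L s' (edge b \<iota>) b = wmsg r f m edge d Fto z' L s' (edge b \<iota>) b"
    using A by (intro wmsg_local) auto
qed

lemma zfinal_local:
  "(\<forall>x\<in>fball r m edge (Suc L) i. z x = z' x) \<Longrightarrow>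
   zfinal r f m edge d Fto F z L i = zfinal r f m edge d Fto F z' L i"
proof -
  assume A: "\<forall>x\<in>fball r m edge (Suc L) i. z x = z' x"
  have "z i = z' i" using A self_in_ball[of i r m edge "Suc L"] by blast
  moreover have "\<And>s. wvert r f m edge d Fto z L s i = wvert r f m edge d Fto z' L s i"
    using A by (rule wvert_local)
  ultimately show ?thesis unfolding zfinal_def by simp
qed

lemma factor_value_local:
  assumes a: "a < m" and r: "0 < r"
    and A: "\<forall>x\<in>fball r m edge (Suc (Suc L)) (edge a 0). fst \<omega> x = fst \<omega>' x \<and> snd \<omega> x = snd \<omega>' x"
  shows "factor_value r f m edge d Fto F L \<omega> a = factor_value r f m edge d Fto F L \<omega>' a"
  unfolding factor_value_def
proof (intro arg_cong[where f=f] ext if_cong refl)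
  fix \<iota> assume i: "\<iota> < r"
  have "a \<in> nbr_factors r m edge (edge a 0)" using a r by (auto simp: nbr_factors_def)
  then have e: "edge a \<iota> \<in> nbv r m edge (edge a 0)" using i by (rule nbv_edge)
  have sub: "fball r m edge (Suc L) (edge a \<iota>) \<subseteq> fball r m edge (Suc (Suc L)) (edge a 0)"
    unfolding ball_Suc'[of r m edge "Suc L" "edge a 0"] using e by auto
  have inb: "edge a \<iota> \<in> fball r m edge (Suc (Suc L)) (edge a 0)"
    using sub self_in_ball by blast
  have "zfinal r f m edge d Fto F (fst \<omega>) L (edge a \<iota>) = zfinal r f m edge d Fto F (fst \<omega>') L (edge a \<iota>)"
    using A sub by (intro zfinal_local) auto
  then show "round_R (\<lambda>i. zfinal r f m edge d Fto F (fst \<omega>) L i) (snd \<omega>) (edge a \<iota>) =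
        round_R (\<lambda>i. zfinal r f m edge d Fto F (fst \<omega>') L i) (snd \<omega>') (edge a \<iota>)"
  proof -
    have "snd \<omega> (edge a \<iota>) = snd \<omega>' (edge a \<iota>)" using A inb by blast
    then show ?thesis using \<open>zfinal r f m edge d Fto F (fst \<omega>) L (edge a \<iota>) = _\<close>
      by (simp add: round_R_def)
  qed
qed



lemma nbr_finite: "finite (nbr_factors r m edge u)"
  by (rule finite_subset[of _ "{..<m}"]) (auto simp: nbr_factors_def)

lemma edge_lt_n: "index_regular r d n m edge \<Longrightarrow> a < m \<Longrightarrow> \<iota> < r \<Longrightarrow> edge a \<iota> < n"
  unfolding index_regular_def by blast

lemma card_nbr_le: assumes "index_regular r d n m edge" shows "card (nbr_factors r m edge u) \<le> d"
proof (cases "u < n")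
  case True then show ?thesis using assms unfolding index_regular_def by auto
next
  case False
  then have "nbr_factors r m edge u = {}" using edge_lt_n[OF assms]
    by (auto simp: nbr_factors_def)
  then show ?thesis by simp
qed

lemma nbv_finite: "finite (nbv r m edge u)"
  unfolding nbv_def using nbr_finite by auto

lemma card_nbv_le: assumes "index_regular r d n m edge" shows "card (nbv r m edge u) \<le> 1 + d * r"
proof -
  have "card (\<Union>b\<in>nbr_factors r m edge u. edge b ` {..<r}) \<le> (\<Sum>b\<in>nbr_factors r m edge u. card (edge b ` {..<r}))"
    by (rule card_UN_le) (rule nbr_finite)
  also have "\<dots> \<le> (\<Sum>b\<in>nbr_factors r m edge u. r)"
    by (intro sum_mono) (metis card_image_le card_lessThan finite_lessThan)
  also have "\<dots> = card (nbr_factors r m edge u) * r" by simp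
  also have "\<dots> \<le> d * r" using card_nbr_le[OF assms] by simp
  finally have "card (\<Union>b\<in>nbr_factors r m edge u. edge b ` {..<r}) \<le> d * r" .
  moreover have "card (nbv r m edge u) \<le> 1 + card (\<Union>b\<in>nbr_factors r m edge u. edge b ` {..<r})"
    unfolding nbv_def using nbr_finite by (simp add: card_insert_if)
  ultimately show ?thesis by linarith
qed

lemma fball_finite: "finite (fball r m edge k v)"
  by (induction k) (auto intro: nbv_finite)

lemma card_fball_le: assumes "index_regular r d n m edge"
  shows "card (fball r m edge k v) \<le> (1 + d * r) ^ k"
proof (induction k)
  case 0 then show ?case by simp
next
  case (Suc k)
  have "card (fball r m edge (Suc k) v) \<le> (\<Sum>u\<in>fball r m edge k v. card (nbv r m edge u))"
    by simp (rule card_UN_le[OF fball_finite])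
  also have "\<dots> \<le> (\<Sum>u\<in>fball r m edge k v. 1 + d * r)"
    by (intro sum_mono card_nbv_le[OF assms])
  also have "\<dots> = card (fball r m edge k v) * (1 + d * r)" by simp
  also have "\<dots> \<le> (1 + d * r) ^ k * (1 + d * r)" using Suc by (rule mult_right_mono) simp
  finally show ?case by (simp add: mult.commute)
qed

lemma fiber_card_le: assumes "index_regular r d n m edge" and r: "0 < r"
  shows "card {a. a < m \<and> edge a 0 = u} \<le> d div r"
proof (cases "u < n")
  case True then show ?thesis using assms unfolding index_regular_def by auto
next
  case False
  then have "{a. a < m \<and> edge a 0 = u} = {}" using edge_lt_n[OF assms(1) _ r] False by force
  then show ?thesis by (metis card.empty zero_le)
qed

lemma m_eq: assumes "index_regular r d n m edge" and r: "0 < r"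
  shows "m = n * (d div r)"
proof -
  have "{..<m} = (\<Union>u\<in>{..<n}. {a. a < m \<and> edge a 0 = u})"
    using edge_lt_n[OF assms(1) _ r] by auto
  then have "card {..<m} = (\<Sum>u\<in>{..<n}. card {a. a < m \<and> edge a 0 = u})"
    by (simp only:) (rule card_UN_disjoint, auto)
  also have "\<dots> = (\<Sum>u\<in>{..<n}. d div r)"
    using assms r unfolding index_regular_def by (intro sum.cong) auto
  finally show ?thesis by simp
qed



lemma greedy_coloring:
  fixes G :: "'a set" and c :: "'a \<Rightarrow> 'a \<Rightarrow> bool" and K :: nat
  assumes fin: "finite G" and sym: "\<And>x y. c x y \<Longrightarrow> c y x"
    and deg: "\<And>x. x \<in> G \<Longrightarrow> card {y\<in>G. y \<noteq> x \<and> c x y} < K"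
  shows "\<exists>col. (\<forall>x\<in>G. col x < K) \<and> (\<forall>x\<in>G. \<forall>y\<in>G. x \<noteq> y \<and> c x y \<longrightarrow> col x \<noteq> col y)"
proof -
  have "finite S \<Longrightarrow> S \<subseteq> G \<Longrightarrow> \<exists>col. (\<forall>x\<in>S. col x < K) \<and> (\<forall>x\<in>S. \<forall>y\<in>S. x \<noteq> y \<and> c x y \<longrightarrow> col x \<noteq> col y)" for S
  proof (induction S rule: finite_induct)
    case empty then show ?case by blast
  next
    case (insert x F)
    have xF: "x \<notin> F" and finF: "finite F" using insert.hyps by simp_all
    have xG: "x \<in> G" and FG: "F \<subseteq> G" using insert.prems by simp_all
    obtain col where col: "\<forall>x\<in>F. col x < K" "\<forall>x\<in>F. \<forall>y\<in>F. x \<noteq> y \<and> c x y \<longrightarrow> col x \<noteq> col y"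
      using insert.IH[OF FG] by (elim exE conjE) simp
    have sub: "{y\<in>F. c x y} \<subseteq> {y\<in>G. y \<noteq> x \<and> c x y}" using xF FG by blast
    have fin1: "finite {y\<in>F. c x y}" using finF by simp
    have "card (col ` {y\<in>F. c x y}) \<le> card {y\<in>F. c x y}"
      using fin1 by (rule card_image_le)
    also have "\<dots> \<le> card {y\<in>G. y \<noteq> x \<and> c x y}"
      using sub fin by (intro card_mono) simp_all
    also have "\<dots> < K" using deg xG by blast
    finally have lt: "card (col ` {y\<in>F. c x y}) < K" .
    have "\<not> {..<K} \<subseteq> col ` {y\<in>F. c x y}"
    proof
      assume "{..<K} \<subseteq> col ` {y\<in>F. c x y}"
      then have "card {..<K} \<le> card (col ` {y\<in>F. c x y})"
        using fin1 by (intro card_mono) simp_all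
      then show False using lt by simp
    qed
    then obtain k where k: "k < K" "k \<notin> col ` {y\<in>F. c x y}" by blast
    show ?case
    proof (intro exI[of _ "col(x := k)"] conjI ballI impI)
      fix z assume "z \<in> insert x F" then show "(col(x := k)) z < K" using col k by (cases "z = x") simp_all
    next
      fix y z assume yz: "y \<in> insert x F" "z \<in> insert x F" "y \<noteq> z \<and> c y z"
      show "(col(x := k)) y \<noteq> (col(x := k)) z"
      proof (cases "y = x")
        case True
        then have "z \<in> F" "c x z" using yz by auto
        then have "col z \<in> col ` {y\<in>F. c x y}" by blast
        then show ?thesis using True yz k by auto
      next
        case False
        then have yF: "y \<in> F" using yz by simp
        show ?thesis
        proof (cases "z = x")
          case True
          then have "c x y" using yz sym by blast
          then have "col y \<in> col ` {y\<in>F. c x y}" using yF by blast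
          then show ?thesis using True False k by auto
        next
          case False2: False
          then have "z \<in> F" using yz by simp
          then show ?thesis using yz col False False2 yF by simp
        qed
      qed
    qed
  qed
  then show ?thesis using fin by blast
qed



definition dcoef :: "nat \<Rightarrow> ((nat \<Rightarrow> real) \<Rightarrow> real) \<Rightarrow> nat \<Rightarrow> (nat \<Rightarrow> real) \<Rightarrow> real" where
  "dcoef r f \<iota> y = (\<Sum>S\<in>{S\<in>Pow {..<r}. \<iota> \<in> S}. fourier_coeff r f S * (\<Prod>\<kappa>\<in>S-{\<iota>}. y \<kappa>))"

lemma mlext_upd:
  "mlext r f (y(\<iota> := s)) =
     (\<Sum>S\<in>{S\<in>Pow {..<r}. \<iota> \<notin> S}. fourier_coeff r f S * (\<Prod>\<kappa>\<in>S. y \<kappa>)) + s * dcoef r f \<iota> y"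
proof -
  have fin: "finite (Pow {..<r})" by simp
  have A: "fourier_coeff r f S * (\<Prod>\<kappa>\<in>S. (y(\<iota> := s)) \<kappa>) =
        (if \<iota> \<notin> S then fourier_coeff r f S * (\<Prod>\<kappa>\<in>S. y \<kappa>) else 0) +
        (if \<iota> \<in> S then s * (fourier_coeff r f S * (\<Prod>\<kappa>\<in>S-{\<iota>}. y \<kappa>)) else 0)"
    if "S \<in> Pow {..<r}" for S
  proof -
    have finS: "finite S" using that finite_subset by auto
    show ?thesis
    proof (cases "\<iota> \<in> S")
      case True
      have "(\<Prod>\<kappa>\<in>S. (y(\<iota> := s)) \<kappa>) = (y(\<iota> := s)) \<iota> * (\<Prod>\<kappa>\<in>S-{\<iota>}. (y(\<iota> := s)) \<kappa>)"
        using finS True by (rule prod.remove)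
      also have "(\<Prod>\<kappa>\<in>S-{\<iota>}. (y(\<iota> := s)) \<kappa>) = (\<Prod>\<kappa>\<in>S-{\<iota>}. y \<kappa>)"
        by (intro prod.cong) auto
      finally show ?thesis using True by simp
    next
      case False
      have "(\<Prod>\<kappa>\<in>S. (y(\<iota> := s)) \<kappa>) = (\<Prod>\<kappa>\<in>S. y \<kappa>)"
        using False by (intro prod.cong) auto
      then show ?thesis using False by simp
    qed
  qed
  have "mlext r f (y(\<iota> := s)) =
      (\<Sum>S\<in>Pow {..<r}. (if \<iota> \<notin> S then fourier_coeff r f S * (\<Prod>\<kappa>\<in>S. y \<kappa>) else 0)) +
      (\<Sum>S\<in>Pow {..<r}. (if \<iota> \<in> S then s * (fourier_coeff r f S * (\<Prod>\<kappa>\<in>S-{\<iota>}. y \<kappa>)) else 0))"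
    unfolding mlext_def by (simp only: sum.distrib[symmetric]) (rule sum.cong[OF refl A])
  also have "\<dots> = (\<Sum>S\<in>{S\<in>Pow {..<r}. \<iota> \<notin> S}. fourier_coeff r f S * (\<Prod>\<kappa>\<in>S. y \<kappa>)) +
      (\<Sum>S\<in>{S\<in>Pow {..<r}. \<iota> \<in> S}. s * (fourier_coeff r f S * (\<Prod>\<kappa>\<in>S-{\<iota>}. y \<kappa>)))"
    by (simp only: sum.inter_filter[OF fin])
  also have "(\<Sum>S\<in>{S\<in>Pow {..<r}. \<iota> \<in> S}. s * (fourier_coeff r f S * (\<Prod>\<kappa>\<in>S-{\<iota>}. y \<kappa>))) = s * dcoef r f \<iota> y"
    unfolding dcoef_def by (simp add: sum_distrib_left)
  finally show ?thesis .
qed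

lemma pderiv_ml_eq: "pderiv_ml r f \<iota> y = dcoef r f \<iota> y"
proof -
  define P where "P = (\<Sum>S\<in>{S\<in>Pow {..<r}. \<iota> \<notin> S}. fourier_coeff r f S * (\<Prod>\<kappa>\<in>S. y \<kappa>))"
  have eq: "(\<lambda>s. mlext r f (y(\<iota> := s))) = (\<lambda>s. P + s * dcoef r f \<iota> y)"
    unfolding P_def by (simp add: mlext_upd)
  have "((\<lambda>s. P + s * dcoef r f \<iota> y) has_real_derivative dcoef r f \<iota> y) (at (y \<iota>))"
    by (auto intro!: derivative_eq_intros)
  then show ?thesis unfolding pderiv_ml_def eq by (rule DERIV_imp_deriv)
qed

lemma Dfac_eq: "Dfac r f edge a j y = dcoef r f (THE \<iota>. \<iota> < r \<and> edge a \<iota> = j) y"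
  unfolding Dfac_def pderiv_ml_eq ..

lemma dcoef_measurable[measurable]:
  assumes "\<And>\<kappa>. (\<lambda>\<omega>. Y \<omega> \<kappa>) \<in> borel_measurable M"
  shows "(\<lambda>\<omega>. dcoef r f \<iota> (Y \<omega>)) \<in> borel_measurable M"
  unfolding dcoef_def using assms by measurable



lemma z_of_measurable:
  assumes Z: "(\<lambda>\<omega>. Z \<omega>) \<in> borel_measurable M"
    and W: "\<And>s. s \<le> l \<Longrightarrow> (\<lambda>\<omega>. W \<omega> s) \<in> borel_measurable M"
    and Fs: "\<And>k. k < l \<Longrightarrow> Fs k \<in> borel_measurable (PiM {..<k} (\<lambda>_. borel))"
  shows "(\<lambda>\<omega>. z_of Fs (Z \<omega>) (W \<omega>) l) \<in> borel_measurable M"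
  unfolding z_of_def
proof (intro borel_measurable_add Z borel_measurable_sum borel_measurable_times borel_measurable_diff)
  fix s assume s: "s \<in> {1..l}"
  then show "(\<lambda>\<omega>. W \<omega> s) \<in> borel_measurable M" "(\<lambda>\<omega>. W \<omega> (s - 1)) \<in> borel_measurable M"
    using W by auto
  have "(\<lambda>\<omega>. \<lambda>q\<in>{..<s - 1}. W \<omega> (Suc q) - W \<omega> q) \<in> measurable M (PiM {..<s - 1} (\<lambda>_. borel))"
    using s W by (intro measurable_restrict borel_measurable_diff) auto
  moreover have "Fs (s - 1) \<in> borel_measurable (PiM {..<s - 1} (\<lambda>_. borel))" using s Fs by auto
  ultimately show "(\<lambda>\<omega>. Fs (s - 1) (\<lambda>q\<in>{..<s - 1}. W \<omega> (Suc q) - W \<omega> q)) \<in> borel_measurable M"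
    by (rule measurable_compose)
qed

lemma msg_tuple_measurable:
  assumes Z: "\<And>x. (\<lambda>\<omega>. Z \<omega> x) \<in> borel_measurable M"
    and W: "\<And>s j c. s \<le> l \<Longrightarrow> (\<lambda>\<omega>. W \<omega> s j c) \<in> borel_measurable M"
    and Fs: "\<And>k. k < l \<Longrightarrow> Fto k \<in> borel_measurable (PiM {..<k} (\<lambda>_. borel))"
  shows "(\<lambda>\<omega>. msg_tuple r edge Fto (Z \<omega>) (W \<omega>) l b \<kappa>) \<in> borel_measurable M"
  unfolding msg_tuple_def
  by (cases "\<kappa> < r") (simp_all add: z_of_measurable Z W Fs)

lemma Dfac_msg_measurable:
  assumes Z: "\<And>x. (\<lambda>\<omega>. Z \<omega> x) \<in> borel_measurable M"
    and W: "\<And>s j c. s \<le> l \<Longrightarrow> (\<lambda>\<omega>. W \<omega> s j c) \<in> borel_measurable M"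
    and Fs: "\<And>k. k < l \<Longrightarrow> Fto k \<in> borel_measurable (PiM {..<k} (\<lambda>_. borel))"
  shows "(\<lambda>\<omega>. Dfac r f edge b i (msg_tuple r edge Fto (Z \<omega>) (W \<omega>) l b)) \<in> borel_measurable M"
  unfolding Dfac_eq
  by (rule dcoef_measurable) (rule msg_tuple_measurable[OF Z W Fs])

lemma wmsg_measurable:
  assumes Z: "\<And>x. (\<lambda>\<omega>. Z \<omega> x) \<in> borel_measurable M"
    and Fs: "\<And>k. k < l \<Longrightarrow> Fto k \<in> borel_measurable (PiM {..<k} (\<lambda>_. borel))"
  shows "(\<lambda>\<omega>. wmsg r f m edge d Fto (Z \<omega>) l s i a) \<in> borel_measurable M"
  using Fs
proof (induction l arbitrary: s i a)
  case 0 then show ?case by simp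
next
  case (Suc l)
  have IH: "(\<lambda>\<omega>. wmsg r f m edge d Fto (Z \<omega>) l s i a) \<in> borel_measurable M" for s i a
    using Suc by auto
  show ?case
  proof (cases "s \<le> l")
    case True then show ?thesis using IH by simp
  next
    case False
    have "(\<lambda>\<omega>. msg_update r f m edge d Fto (Z \<omega>) (wmsg r f m edge d Fto (Z \<omega>) l) l i a) \<in> borel_measurable M"
      unfolding msg_update_def
      by (intro borel_measurable_divide borel_measurable_sum measurable_const Dfac_msg_measurable[OF Z] IH)
         (use Suc.prems in auto)
    then show ?thesis using False by simp
  qed
qed

lemma wvert_measurable:
  assumes Z: "\<And>x. (\<lambda>\<omega>. Z \<omega> x) \<in> borel_measurable M"
    and Fs: "\<And>k. k < L \<Longrightarrow> Fto k \<in> borel_measurable (PiM {..<k} (\<lambda>_. borel))"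
    and s: "s \<le> L"
  shows "(\<lambda>\<omega>. wvert r f m edge d Fto (Z \<omega>) L s i) \<in> borel_measurable M"
proof (cases "s = 0")
  case True then show ?thesis by (simp add: wvert_def)
next
  case False
  have "(\<lambda>\<omega>. (\<Sum>b\<in>nbr_factors r m edge i.
          Dfac r f edge b i (msg_tuple r edge Fto (Z \<omega>) (wmsg r f m edge d Fto (Z \<omega>) L) (s - 1) b)) / sqrt (real d))
        \<in> borel_measurable M"
    by (intro borel_measurable_divide borel_measurable_sum measurable_const Dfac_msg_measurable[OF Z]
        wmsg_measurable[OF Z]) (use Fs s in auto)
  then show ?thesis using False by (simp add: wvert_def)
qed

lemma zfinal_measurable:
  assumes Z: "\<And>x. (\<lambda>\<omega>. Z \<omega> x) \<in> borel_measurable M"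
    and Fs: "\<And>k. k < L \<Longrightarrow> Fto k \<in> borel_measurable (PiM {..<k} (\<lambda>_. borel))"
    and F: "\<And>k. k < L \<Longrightarrow> F k \<in> borel_measurable (PiM {..<k} (\<lambda>_. borel))"
  shows "(\<lambda>\<omega>. zfinal r f m edge d Fto F (Z \<omega>) L i) \<in> borel_measurable M"
  unfolding zfinal_def
  by (rule z_of_measurable[OF Z wvert_measurable[OF Z Fs] F])

lemma pm_cube_finite: "finite (pm_cube r)"
proof -
  have "pm_cube r \<subseteq> (\<lambda>h. \<lambda>\<iota>. if \<iota> < r then h \<iota> else 0) ` (PiE {..<r} (\<lambda>_. {1, -1}))"
  proof
    fix x assume x: "x \<in> pm_cube r"
    have "x = (\<lambda>\<iota>. if \<iota> < r then (restrict x {..<r}) \<iota> else 0)"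
      using x by (auto simp: pm_cube_def fun_eq_iff)
    moreover have "restrict x {..<r} \<in> PiE {..<r} (\<lambda>_. {1, -1})"
      using x by (auto simp: pm_cube_def)
    ultimately show "x \<in> (\<lambda>h. \<lambda>\<iota>. if \<iota> < r then h \<iota> else 0) ` (PiE {..<r} (\<lambda>_. {1, -1}))"
      by blast
  qed
  moreover have "finite (PiE {..<r} (\<lambda>_. {1::real, -1}))" by (intro finite_PiE) auto
  ultimately show ?thesis using finite_subset by blast
qed

lemma f_comp_measurable:
  fixes f :: "(nat \<Rightarrow> real) \<Rightarrow> real" and V :: "'a \<Rightarrow> nat \<Rightarrow> real"
  assumes V: "\<And>\<iota>. (\<lambda>\<omega>. V \<omega> \<iota>) \<in> borel_measurable M"
    and Vin: "\<And>\<omega>. V \<omega> \<in> pm_cube r"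
  shows "(\<lambda>\<omega>. f (V \<omega>)) \<in> borel_measurable M"
proof -
  have eq: "f (V \<omega>) = (\<Sum>x\<in>pm_cube r. (if (\<forall>\<iota>\<in>{..<r}. V \<omega> \<iota> = x \<iota>) then f x else 0))" for \<omega>
  proof -
    have "(\<Sum>x\<in>pm_cube r. (if (\<forall>\<iota>\<in>{..<r}. V \<omega> \<iota> = x \<iota>) then f x else 0)) =
          (\<Sum>x\<in>pm_cube r. (if V \<omega> = x then f x else 0))"
    proof (intro sum.cong refl if_cong)
      fix x assume "x \<in> pm_cube r"
      show "(\<forall>\<iota>\<in>{..<r}. V \<omega> \<iota> = x \<iota>) = (V \<omega> = x)"
      proof
        assume A: "\<forall>\<iota>\<in>{..<r}. V \<omega> \<iota> = x \<iota>"
        show "V \<omega> = x"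
        proof
          fix \<iota> show "V \<omega> \<iota> = x \<iota>"
          proof (cases "\<iota> < r")
            case True then show ?thesis using A by simp
          next
            case False then show ?thesis using Vin[of \<omega>] \<open>x \<in> pm_cube r\<close> by (simp add: pm_cube_def)
          qed
        qed
      qed simp
    qed
    also have "\<dots> = f (V \<omega>)" using Vin[of \<omega>] pm_cube_finite by (simp add: sum.delta)
    finally show ?thesis by simp
  qed
  have "(\<lambda>\<omega>. if (\<forall>\<iota>\<in>{..<r}. V \<omega> \<iota> = x \<iota>) then f x else 0) \<in> borel_measurable M" for x
  proof (rule measurable_If)
    show "{\<omega> \<in> space M. \<forall>\<iota>\<in>{..<r}. V \<omega> \<iota> = x \<iota>} \<in> sets M"
      by (intro sets.sets_Collect_finite_All borel_measurable_eq V measurable_const) auto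
  qed auto
  then show ?thesis unfolding eq by (intro borel_measurable_sum)
qed

lemma round_R_in: "round_R z U i \<in> {1, -1}"
  by (simp add: round_R_def)

lemma factor_value_measurable:
  assumes Z: "\<And>x. (\<lambda>\<omega>. fst (P \<omega>) x) \<in> borel_measurable M"
    and U: "\<And>x. (\<lambda>\<omega>. snd (P \<omega>) x) \<in> borel_measurable M"
    and Fs: "\<And>k. k < L \<Longrightarrow> Fto k \<in> borel_measurable (PiM {..<k} (\<lambda>_. borel))"
    and F: "\<And>k. k < L \<Longrightarrow> F k \<in> borel_measurable (PiM {..<k} (\<lambda>_. borel))"
  shows "(\<lambda>\<omega>. factor_value r f m edge d Fto F L (P \<omega>) a) \<in> borel_measurable M"
  unfolding factor_value_def
proof (rule f_comp_measurable[where V="\<lambda>\<omega> \<iota>. if \<iota> < r then round_R (\<lambda>i. zfinal r f m edge d Fto F (fst (P \<omega>)) L i) (snd (P \<omega>)) (edge a \<iota>) else 0"])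
  fix \<iota>
  have zf: "(\<lambda>\<omega>. zfinal r f m edge d Fto F (fst (P \<omega>)) L j) \<in> borel_measurable M" for j
    by (rule zfinal_measurable[OF Z Fs F])
  have tr: "(\<lambda>\<omega>. trnc (zfinal r f m edge d Fto F (fst (P \<omega>)) L j)) \<in> borel_measurable M" for j
    unfolding trnc_def using zf by measurable
  show "(\<lambda>\<omega>. if \<iota> < r then round_R (\<lambda>i. zfinal r f m edge d Fto F (fst (P \<omega>)) L i) (snd (P \<omega>)) (edge a \<iota>) else 0)
        \<in> borel_measurable M"
    unfolding round_R_def using tr U by measurable
next
  fix \<omega>
  show "(\<lambda>\<iota>. if \<iota> < r then round_R (\<lambda>i. zfinal r f m edge d Fto F (fst (P \<omega>)) L i) (snd (P \<omega>)) (edge a \<iota>) else 0)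
        \<in> pm_cube r"
    unfolding pm_cube_def using round_R_in by auto
qed

lemma factor_value_01:
  fixes f :: "(nat \<Rightarrow> real) \<Rightarrow> real"
  assumes f01: "\<forall>x\<in>pm_cube r. f x \<in> {0, 1}"
  shows "factor_value r f m edge d Fto F L \<omega> a \<in> {0, 1}"
  unfolding factor_value_def
  by (rule f01[rule_format]) (auto simp: pm_cube_def round_R_def)



definition Nm :: "real \<Rightarrow> real measure" where "Nm \<delta> = density lborel (normal_density 0 (sqrt \<delta>))"
definition Um :: "real measure" where "Um = uniform_measure lborel {0..1}"
definition Mix :: "real \<Rightarrow> nat + nat \<Rightarrow> real measure" where "Mix \<delta> = case_sum (\<lambda>_. Nm \<delta>) (\<lambda>_. Um)"
definition Tn :: "nat \<Rightarrow> (nat + nat) set" where "Tn n = Inl ` {..<n} \<union> Inr ` {..<n}"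
definition Om :: "real \<Rightarrow> nat \<Rightarrow> (nat + nat \<Rightarrow> real) measure" where "Om \<delta> n = PiM (Tn n) (Mix \<delta>)"
definition Psi :: "nat \<Rightarrow> (nat + nat \<Rightarrow> real) \<Rightarrow> (nat \<Rightarrow> real) \<times> (nat \<Rightarrow> real)" where
  "Psi n x = (\<lambda>i\<in>{..<n}. x (Inl i), \<lambda>i\<in>{..<n}. x (Inr i))"

lemma prob_Nm: "0 < \<delta> \<Longrightarrow> prob_space (Nm \<delta>)" unfolding Nm_def by (rule prob_space_normal_density) simp
lemma prob_Um: "prob_space Um" unfolding Um_def by (rule prob_space_uniform_measure) auto
lemma prob_Mix: "0 < \<delta> \<Longrightarrow> prob_space (Mix \<delta> k)" by (cases k) (simp_all add: Mix_def prob_Nm prob_Um)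
lemma sets_Nm[measurable_cong]: "sets (Nm \<delta>) = sets borel" by (simp add: Nm_def)
lemma sets_Um[measurable_cong]: "sets Um = sets borel" by (simp add: Um_def)
lemma sets_Mix: "sets (Mix \<delta> k) = sets borel" by (cases k) (simp_all add: Mix_def sets_Nm sets_Um)

lemma alg_space_eq: "alg_space \<delta> n = PiM {..<n} (\<lambda>_. Nm \<delta>) \<Otimes>\<^sub>M PiM {..<n} (\<lambda>_. Um)"
  unfolding alg_space_def Nm_def Um_def ..

lemma product_prob_Mix: "0 < \<delta> \<Longrightarrow> product_prob_space (Mix \<delta>)"
  by (intro product_prob_spaceI prob_Mix)

lemma prob_Om: "0 < \<delta> \<Longrightarrow> prob_space (Om \<delta> n)"
  unfolding Om_def by (intro prob_space_PiM prob_Mix)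

lemma prob_alg: "0 < \<delta> \<Longrightarrow> prob_space (alg_space \<delta> n)"
  unfolding alg_space_eq by (intro prob_space_pair prob_space_PiM prob_Nm prob_Um)

lemma coord_measurable:
  assumes "\<And>k. sets (M k) = sets borel"
  shows "(\<lambda>y. y k :: real) \<in> borel_measurable (PiM K M)"
proof (cases "k \<in> K")
  case True
  then have "(\<lambda>y. y k) \<in> measurable (PiM K M) (M k)" by (rule measurable_component_singleton)
  moreover have "measurable (PiM K M) (M k) = measurable (PiM K M) borel"
    by (rule measurable_cong_sets[OF refl assms])
  ultimately show ?thesis by simp
next
  case False
  have "(\<lambda>y. undefined :: real) \<in> borel_measurable (PiM K M)" by simp
  moreover have "((\<lambda>y. undefined :: real) \<in> borel_measurable (PiM K M)) = ((\<lambda>y. y k) \<in> borel_measurable (PiM K M))"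
  proof (rule measurable_cong)
    fix w assume "w \<in> space (PiM K M)"
    then have "w \<in> PiE K (\<lambda>i. space (M i))" by (simp add: space_PiM)
    then show "undefined = w k" using PiE_arb[of w K "\<lambda>i. space (M i)" k] False by simp
  qed
  ultimately show ?thesis by simp
qed

lemma Psi_measurable: "Psi n \<in> measurable (Om \<delta> n) (alg_space \<delta> n)"
proof -
  have A: "(\<lambda>x. x (Inl i)) \<in> measurable (PiM (Tn n) (Mix \<delta>)) (Nm \<delta>)"
     and B: "(\<lambda>x. x (Inr i)) \<in> measurable (PiM (Tn n) (Mix \<delta>)) Um" if "i \<in> {..<n}" for i
  proof -
    have l: "Inl i \<in> Tn n" and r: "Inr i \<in> Tn n" using that by (auto simp: Tn_def)
    show "(\<lambda>x. x (Inl i)) \<in> measurable (PiM (Tn n) (Mix \<delta>)) (Nm \<delta>)"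
      using measurable_component_singleton[OF l, of "Mix \<delta>"] by (simp only: Mix_def sum.case)
    show "(\<lambda>x. x (Inr i)) \<in> measurable (PiM (Tn n) (Mix \<delta>)) Um"
      using measurable_component_singleton[OF r, of "Mix \<delta>"] by (simp only: Mix_def sum.case)
  qed
  have "(\<lambda>x. \<lambda>i\<in>{..<n}. x (Inl i)) \<in> measurable (PiM (Tn n) (Mix \<delta>)) (PiM {..<n} (\<lambda>_. Nm \<delta>))"
    by (rule measurable_restrict) (rule A)
  moreover have "(\<lambda>x. \<lambda>i\<in>{..<n}. x (Inr i)) \<in> measurable (PiM (Tn n) (Mix \<delta>)) (PiM {..<n} (\<lambda>_. Um))"
    by (rule measurable_restrict) (rule B)
  ultimately show ?thesis unfolding alg_space_eq Psi_def Om_def by (rule measurable_Pair)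
qed



lemma comp_Inl: "Inl i \<in> K \<Longrightarrow> (\<lambda>x. x (Inl i)) \<in> measurable (PiM K (Mix \<delta>)) (Nm \<delta>)"
  using measurable_component_singleton[of "Inl i" K "Mix \<delta>"] by (simp only: Mix_def sum.case)
lemma comp_Inr: "Inr i \<in> K \<Longrightarrow> (\<lambda>x. x (Inr i)) \<in> measurable (PiM K (Mix \<delta>)) Um"
  using measurable_component_singleton[of "Inr i" K "Mix \<delta>"] by (simp only: Mix_def sum.case)

lemma reindex_Inl:
  assumes d: "0 < \<delta>"
  shows "distr (PiM (Inl ` A) (Mix \<delta>)) (PiM A (\<lambda>_. Nm \<delta>)) (\<lambda>u. \<lambda>i\<in>A. u (Inl i)) = PiM A (\<lambda>_. Nm \<delta>)"
proof -
  have "distr (PiM (Inl ` A) (Mix \<delta>)) (PiM A (\<lambda>i. Mix \<delta> (Inl i))) (\<lambda>u. \<lambda>i\<in>A. u (Inl i)) = PiM A (\<lambda>i. Mix \<delta> (Inl i))"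
    by (rule distr_PiM_reindex) (auto intro: prob_Mix d)
  moreover have "(\<lambda>i. Mix \<delta> (Inl i)) = (\<lambda>_. Nm \<delta>)" by (simp add: Mix_def fun_eq_iff)
  ultimately show ?thesis by simp
qed

lemma reindex_Inr:
  assumes d: "0 < \<delta>"
  shows "distr (PiM (Inr ` A) (Mix \<delta>)) (PiM A (\<lambda>_. Um)) (\<lambda>u. \<lambda>i\<in>A. u (Inr i)) = PiM A (\<lambda>_. Um)"
proof -
  have "distr (PiM (Inr ` A) (Mix \<delta>)) (PiM A (\<lambda>i. Mix \<delta> (Inr i))) (\<lambda>u. \<lambda>i\<in>A. u (Inr i)) = PiM A (\<lambda>i. Mix \<delta> (Inr i))"
    by (rule distr_PiM_reindex) (auto intro: prob_Mix d)
  moreover have "(\<lambda>i. Mix \<delta> (Inr i)) = (\<lambda>_. Um)" by (simp add: Mix_def fun_eq_iff)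
  ultimately show ?thesis by simp
qed

lemma alg_space_distr:
  assumes d: "0 < \<delta>"
  shows "alg_space \<delta> n = distr (Om \<delta> n) (alg_space \<delta> n) (Psi n)"
proof -
  define A where "A = {..<n}"
  define I' where "I' = (Inl ` A :: (nat + nat) set)"
  define J' where "J' = (Inr ` A :: (nat + nat) set)"
  define P1 where "P1 = PiM I' (Mix \<delta>)"
  define P2 where "P2 = PiM J' (Mix \<delta>)"
  define M1 where "M1 = PiM A (\<lambda>_. Nm \<delta>)"
  define M2 where "M2 = PiM A (\<lambda>_. Um)"
  interpret PM: product_prob_space "Mix \<delta>" using product_prob_Mix[OF d] .
  have IJ: "I' \<inter> J' = {}" by (auto simp: I'_def J'_def)
  have fin: "finite I'" "finite J'" by (auto simp: I'_def J'_def A_def)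
  have Om_eq: "Om \<delta> n = distr (P1 \<Otimes>\<^sub>M P2) (PiM (I' \<union> J') (Mix \<delta>)) (merge I' J')"
    unfolding Om_def P1_def P2_def using PM.distr_merge[OF IJ fin]
    by (simp add: Tn_def I'_def J'_def A_def)
  have TIJ: "Tn n = I' \<union> J'" by (simp add: Tn_def I'_def J'_def A_def)
  have alg: "alg_space \<delta> n = M1 \<Otimes>\<^sub>M M2" unfolding alg_space_eq M1_def M2_def A_def ..
  interpret P1: prob_space P1 unfolding P1_def by (intro prob_space_PiM prob_Mix d)
  interpret P2: prob_space P2 unfolding P2_def by (intro prob_space_PiM prob_Mix d)
  have psm1: "prob_space M1" unfolding M1_def by (intro prob_space_PiM prob_Nm d)
  have psm2: "prob_space M2" unfolding M2_def by (intro prob_space_PiM prob_Um)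
  have PsiM: "Psi n \<in> measurable (Om \<delta> n) (M1 \<Otimes>\<^sub>M M2)" using Psi_measurable alg by metis
  have "M1 \<Otimes>\<^sub>M M2 = distr (Om \<delta> n) (M1 \<Otimes>\<^sub>M M2) (Psi n)"
  proof (rule pair_measure_eqI)
    show "sigma_finite_measure M1" "sigma_finite_measure M2"
      using psm1 psm2 by (simp_all add: prob_space_imp_sigma_finite)
    show "sets (M1 \<Otimes>\<^sub>M M2) = sets (distr (Om \<delta> n) (M1 \<Otimes>\<^sub>M M2) (Psi n))" by simp
  next
    fix X Y assume X: "X \<in> sets M1" and Y: "Y \<in> sets M2"
    have XY: "X \<times> Y \<in> sets (M1 \<Otimes>\<^sub>M M2)" using X Y by simp
    define \<rho>1 where "\<rho>1 = (\<lambda>u::nat+nat\<Rightarrow>real. \<lambda>i\<in>A. u (Inl i))"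
    define \<rho>2 where "\<rho>2 = (\<lambda>u::nat+nat\<Rightarrow>real. \<lambda>i\<in>A. u (Inr i))"
    have r1: "\<rho>1 \<in> measurable P1 M1" unfolding \<rho>1_def P1_def M1_def I'_def
      by (intro measurable_restrict comp_Inl) auto
    have r2: "\<rho>2 \<in> measurable P2 M2" unfolding \<rho>2_def P2_def M2_def J'_def
      by (intro measurable_restrict comp_Inr) auto
    have S: "Psi n -` (X \<times> Y) \<inter> space (Om \<delta> n) \<in> sets (Om \<delta> n)"
      using PsiM XY by (rule measurable_sets)
    have "emeasure (distr (Om \<delta> n) (M1 \<Otimes>\<^sub>M M2) (Psi n)) (X \<times> Y) = emeasure (Om \<delta> n) (Psi n -` (X \<times> Y) \<inter> space (Om \<delta> n))"
      using PsiM XY by (rule emeasure_distr)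
    also have "\<dots> = emeasure (P1 \<Otimes>\<^sub>M P2) (merge I' J' -` (Psi n -` (X \<times> Y) \<inter> space (Om \<delta> n)) \<inter> space (P1 \<Otimes>\<^sub>M P2))"
    proof -
      have mm: "merge I' J' \<in> measurable (P1 \<Otimes>\<^sub>M P2) (PiM (I' \<union> J') (Mix \<delta>))"
        unfolding P1_def P2_def by (rule measurable_merge)
      have "Psi n -` (X \<times> Y) \<inter> space (Om \<delta> n) \<in> sets (PiM (I' \<union> J') (Mix \<delta>))"
        using S by (simp add: Om_def TIJ)
      then show ?thesis
        by (subst (1) Om_eq) (rule emeasure_distr[OF mm])
    qed
    also have "merge I' J' -` (Psi n -` (X \<times> Y) \<inter> space (Om \<delta> n)) \<inter> space (P1 \<Otimes>\<^sub>M P2) =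
        (\<rho>1 -` X \<inter> space P1) \<times> (\<rho>2 -` Y \<inter> space P2)"
    proof (intro set_eqI iffI)
      fix z assume z: "z \<in> merge I' J' -` (Psi n -` (X \<times> Y) \<inter> space (Om \<delta> n)) \<inter> space (P1 \<Otimes>\<^sub>M P2)"
      obtain u v where uv: "z = (u, v)" by fastforce
      have "Psi n (merge I' J' (u, v)) = (\<rho>1 u, \<rho>2 v)"
        using IJ by (auto simp: Psi_def \<rho>1_def \<rho>2_def A_def I'_def J'_def fun_eq_iff merge_def)
      then show "z \<in> (\<rho>1 -` X \<inter> space P1) \<times> (\<rho>2 -` Y \<inter> space P2)"
        using z uv by (auto simp: space_pair_measure)
    next
      fix z assume z: "z \<in> (\<rho>1 -` X \<inter> space P1) \<times> (\<rho>2 -` Y \<inter> space P2)"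
      obtain u v where uv: "z = (u, v)" by fastforce
      have sp: "z \<in> space (P1 \<Otimes>\<^sub>M P2)" using z by (auto simp: space_pair_measure)
      have mm: "merge I' J' \<in> measurable (P1 \<Otimes>\<^sub>M P2) (Om \<delta> n)"
        unfolding P1_def P2_def Om_def TIJ by (rule measurable_merge)
      have "merge I' J' z \<in> space (Om \<delta> n)" using measurable_space[OF mm sp] .
      moreover have "Psi n (merge I' J' (u, v)) = (\<rho>1 u, \<rho>2 v)"
        using IJ by (auto simp: Psi_def \<rho>1_def \<rho>2_def A_def I'_def J'_def fun_eq_iff merge_def)
      ultimately show "z \<in> merge I' J' -` (Psi n -` (X \<times> Y) \<inter> space (Om \<delta> n)) \<inter> space (P1 \<Otimes>\<^sub>M P2)"
        using z uv sp by auto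
    qed
    also have "emeasure (P1 \<Otimes>\<^sub>M P2) ((\<rho>1 -` X \<inter> space P1) \<times> (\<rho>2 -` Y \<inter> space P2)) =
        emeasure P1 (\<rho>1 -` X \<inter> space P1) * emeasure P2 (\<rho>2 -` Y \<inter> space P2)"
      using measurable_sets[OF r1 X] measurable_sets[OF r2 Y] by (rule P2.emeasure_pair_measure_Times)
    also have "emeasure P1 (\<rho>1 -` X \<inter> space P1) = emeasure M1 X"
    proof -
      have "emeasure P1 (\<rho>1 -` X \<inter> space P1) = emeasure (distr P1 M1 \<rho>1) X"
        using r1 X by (simp add: emeasure_distr)
      also have "distr P1 M1 \<rho>1 = M1"
        unfolding P1_def M1_def \<rho>1_def I'_def by (rule reindex_Inl[OF d])
      finally show ?thesis .
    qed
    also have "emeasure P2 (\<rho>2 -` Y \<inter> space P2) = emeasure M2 Y"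
    proof -
      have "emeasure P2 (\<rho>2 -` Y \<inter> space P2) = emeasure (distr P2 M2 \<rho>2) Y"
        using r2 Y by (simp add: emeasure_distr)
      also have "distr P2 M2 \<rho>2 = M2"
        unfolding P2_def M2_def \<rho>2_def J'_def by (rule reindex_Inr[OF d])
      finally show ?thesis .
    qed
    finally show "emeasure M1 X * emeasure M2 Y = emeasure (distr (Om \<delta> n) (M1 \<Otimes>\<^sub>M M2) (Psi n)) (X \<times> Y)" ..
  qed
  then show ?thesis using alg by simp
qed



lemma coords_indep:
  assumes d: "0 < \<delta>" and n: "0 < n"
  shows "prob_space.indep_vars (Om \<delta> n) (Mix \<delta>) (\<lambda>k x. x k) (Tn n)"
proof -
  interpret P: prob_space "Om \<delta> n" using prob_Om[OF d] .
  have ne: "Tn n \<noteq> {}" using n by (auto simp: Tn_def)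
  have rv: "\<And>k. k \<in> Tn n \<Longrightarrow> P.random_variable (Mix \<delta> k) (\<lambda>x. x k)"
    unfolding Om_def by (rule measurable_component_singleton)
  show ?thesis
  proof (subst P.indep_vars_iff_distr_eq_PiM'[OF ne rv])
    have "distr (Om \<delta> n) (PiM (Tn n) (Mix \<delta>)) (\<lambda>x. \<lambda>k\<in>Tn n. x k) = distr (Om \<delta> n) (Om \<delta> n) (\<lambda>x. x)"
      by (rule distr_cong) (auto simp: Om_def space_PiM PiE_def extensional_restrict)
    also have "\<dots> = Om \<delta> n" by simp
    also have "Om \<delta> n = PiM (Tn n) (\<lambda>k. distr (Om \<delta> n) (Mix \<delta> k) (\<lambda>x. x k))"
      unfolding Om_def
      by (intro PiM_cong refl distr_PiM_component[symmetric] prob_Mix d) 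
    finally show "distr (Om \<delta> n) (PiM (Tn n) (Mix \<delta>)) (\<lambda>x. \<lambda>k\<in>Tn n. x k) =
        PiM (Tn n) (\<lambda>k. distr (Om \<delta> n) (Mix \<delta> k) (\<lambda>x. x k))" .
  qed assumption
qed

lemma (in prob_space) class_union_bound:
  fixes X :: "nat \<Rightarrow> 'a \<Rightarrow> real" and e :: "nat \<Rightarrow> real" and col :: "nat \<Rightarrow> nat"
  assumes meas: "\<And>a. a < m \<Longrightarrow> X a \<in> borel_measurable M"
    and K: "0 < K" and colK: "\<And>a. a < m \<Longrightarrow> col a < K"
    and eps: "0 < \<epsilon>"
    and cls: "\<And>j. j < K \<Longrightarrow> prob {x\<in>space M. \<epsilon> / real K \<le> \<bar>\<Sum>a\<in>{a. a < m \<and> col a = j}. (X a x - e a)\<bar>} \<le> B"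
  shows "prob {x\<in>space M. \<epsilon> \<le> \<bar>\<Sum>a<m. (X a x - e a)\<bar>} \<le> real K * B"
proof -
  define E where "E j = {x\<in>space M. \<epsilon> / real K \<le> \<bar>\<Sum>a\<in>{a. a < m \<and> col a = j}. (X a x - e a)\<bar>}" for j
  have Ems: "E j \<in> sets M" for j
  proof -
    have "(\<lambda>x. \<bar>\<Sum>a\<in>{a. a < m \<and> col a = j}. (X a x - e a)\<bar>) \<in> borel_measurable M"
      using meas by (intro borel_measurable_abs borel_measurable_sum borel_measurable_diff measurable_const) auto
    then show ?thesis unfolding E_def by measurable
  qed
  have sub: "{x\<in>space M. \<epsilon> \<le> \<bar>\<Sum>a<m. (X a x - e a)\<bar>} \<subseteq> (\<Union>j\<in>{..<K}. E j)"
  proof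
    fix x assume x: "x \<in> {x\<in>space M. \<epsilon> \<le> \<bar>\<Sum>a<m. (X a x - e a)\<bar>}"
    show "x \<in> (\<Union>j\<in>{..<K}. E j)"
    proof (rule ccontr)
      assume "x \<notin> (\<Union>j\<in>{..<K}. E j)"
      then have lt: "\<bar>\<Sum>a\<in>{a. a < m \<and> col a = j}. (X a x - e a)\<bar> < \<epsilon> / real K" if "j < K" for j
        using x that unfolding E_def by (auto simp: not_le)
      have "(\<Sum>a<m. (X a x - e a)) = (\<Sum>j\<in>{..<K}. \<Sum>a\<in>{a. a \<in> {..<m} \<and> col a = j}. (X a x - e a))"
        by (rule sum.group[symmetric]) (use colK in auto)
      then have "\<bar>\<Sum>a<m. (X a x - e a)\<bar> \<le> (\<Sum>j\<in>{..<K}. \<bar>\<Sum>a\<in>{a. a < m \<and> col a = j}. (X a x - e a)\<bar>)"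
        by (simp add: sum_abs)
      also have "\<dots> < (\<Sum>j\<in>{..<K}. \<epsilon> / real K)"
        using K by (intro sum_strict_mono lt) auto
      also have "\<dots> = \<epsilon>" using K by simp
      finally show False using x by simp
    qed
  qed
  have "prob {x\<in>space M. \<epsilon> \<le> \<bar>\<Sum>a<m. (X a x - e a)\<bar>} \<le> prob (\<Union>j\<in>{..<K}. E j)"
    using sub Ems by (intro finite_measure_mono) auto
  also have "\<dots> \<le> (\<Sum>j\<in>{..<K}. prob (E j))"
    using Ems by (intro finite_measure_subadditive_finite) auto
  also have "\<dots> \<le> (\<Sum>j\<in>{..<K}. B)"
    by (intro sum_mono) (use cls in \<open>auto simp: E_def\<close>)
  also have "\<dots> = real K * B" by simp
  finally show ?thesis .
qed



lemma fst_Psi_measurable: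
  "(\<lambda>y. fst (Psi n y) x) \<in> borel_measurable (PiM K (Mix \<delta>))"
proof (cases "x < n")
  case True
  then have "(\<lambda>y. fst (Psi n y) x) = (\<lambda>y. y (Inl x))" by (auto simp: Psi_def fun_eq_iff)
  then show ?thesis using coord_measurable[of "Mix \<delta>" "Inl x" K] sets_Mix by simp
next
  case False
  then have "(\<lambda>y. fst (Psi n y) x) = (\<lambda>y. undefined)" by (auto simp: Psi_def fun_eq_iff)
  then show ?thesis by simp
qed

lemma snd_Psi_measurable:
  "(\<lambda>y. snd (Psi n y) x) \<in> borel_measurable (PiM K (Mix \<delta>))"
proof (cases "x < n")
  case True
  then have "(\<lambda>y. snd (Psi n y) x) = (\<lambda>y. y (Inr x))" by (auto simp: Psi_def fun_eq_iff)
  then show ?thesis using coord_measurable[of "Mix \<delta>" "Inr x" K] sets_Mix by simp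
next
  case False
  then have "(\<lambda>y. snd (Psi n y) x) = (\<lambda>y. undefined)" by (auto simp: Psi_def fun_eq_iff)
  then show ?thesis by simp
qed

lemma class_bound:
  fixes f :: "(nat \<Rightarrow> real) \<Rightarrow> real"
  assumes f01: "\<forall>x\<in>pm_cube r. f x \<in> {0, 1}" and r: "0 < r" and d: "0 < \<delta>" and n: "0 < n"
    and FtoM: "\<And>k. k < L \<Longrightarrow> Fto k \<in> borel_measurable (PiM {..<k} (\<lambda>_. borel))"
    and FM: "\<And>k. k < L \<Longrightarrow> F k \<in> borel_measurable (PiM {..<k} (\<lambda>_. borel))"
    and Cm: "Cj \<subseteq> {..<m}"
    and disj: "\<And>a a'. a \<in> Cj \<Longrightarrow> a' \<in> Cj \<Longrightarrow> a \<noteq> a' \<Longrightarrow>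
        fball r m edge (Suc (Suc L)) (edge a 0) \<inter> fball r m edge (Suc (Suc L)) (edge a' 0) = {}"
    and e: "\<And>a. e a = integral\<^sup>L (Om \<delta> n) (\<lambda>x. factor_value r f m edge d Fto F L (Psi n x) a)"
    and eps: "0 < \<epsilon>"
  shows "measure (Om \<delta> n) {x\<in>space (Om \<delta> n). \<epsilon> \<le> \<bar>\<Sum>a\<in>Cj. (factor_value r f m edge d Fto F L (Psi n x) a - e a)\<bar>}
          \<le> 2 * exp (- 2 * \<epsilon>\<^sup>2 / real m)"
proof (cases "Cj = {}")
  case True
  then show ?thesis using eps by simp
next
  case False
  interpret P: prob_space "Om \<delta> n" using prob_Om[OF d] .
  define R where "R = Suc (Suc L)"
  define D where "D a = fball r m edge R (edge a 0)" for a
  define Ks where "Ks a = Inl ` (D a \<inter> {..<n}) \<union> Inr ` (D a \<inter> {..<n})" for a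
  define X where "X a x = factor_value r f m edge d Fto F L (Psi n x) a" for a x
  define Y where "Y a y = factor_value r f m edge d Fto F L (Psi n y) a" for a y
  define X' where "X' a x = Y a (restrict x (Ks a))" for a x
  have finC: "finite Cj" using Cm finite_subset by blast
  have Ymeas: "Y a \<in> borel_measurable (PiM (Ks a) (Mix \<delta>))" for a
    unfolding Y_def[abs_def]
    by (rule factor_value_measurable[OF fst_Psi_measurable snd_Psi_measurable FtoM FM])
  have indep0: "P.indep_vars (Mix \<delta>) (\<lambda>k x. x k) (Tn n)" by (rule coords_indep[OF d n])
  have indep1: "P.indep_vars (\<lambda>a. PiM (Ks a) (Mix \<delta>)) (\<lambda>a \<omega>. restrict (\<lambda>k. \<omega> k) (Ks a)) Cj"
  proof (rule P.indep_vars_restrict[OF indep0])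
    fix a assume "a \<in> Cj" then show "Ks a \<subseteq> Tn n" by (auto simp: Ks_def Tn_def)
  next
    show "disjoint_family_on Ks Cj"
      unfolding disjoint_family_on_def
    proof (intro ballI impI)
      fix a a' assume "a \<in> Cj" "a' \<in> Cj" "a \<noteq> a'"
      then have "D a \<inter> D a' = {}" using disj by (simp add: D_def R_def)
      then show "Ks a \<inter> Ks a' = {}" by (auto simp: Ks_def)
    qed
  qed
  have indep2: "P.indep_vars (\<lambda>_. borel) (\<lambda>a x. Y a (restrict (\<lambda>k. x k) (Ks a))) Cj"
    by (rule P.indep_vars_compose2[OF indep1 Ymeas])
  then have indep: "P.indep_vars (\<lambda>_. borel) X' Cj" unfolding X'_def by simp
  have eqX: "X' a x = X a x" if a: "a \<in> Cj" for a x
  proof -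
    have am: "a < m" using a Cm by auto
    show ?thesis unfolding X'_def Y_def X_def
    proof (rule factor_value_local[OF am r], intro ballI conjI)
      fix v assume v: "v \<in> fball r m edge (Suc (Suc L)) (edge a 0)"
      then have vD: "v \<in> D a" by (simp add: D_def R_def)
      show "fst (Psi n (restrict x (Ks a))) v = fst (Psi n x) v"
        using vD by (cases "v < n") (auto simp: Psi_def Ks_def)
      show "snd (Psi n (restrict x (Ks a))) v = snd (Psi n x) v"
        using vD by (cases "v < n") (auto simp: Psi_def Ks_def)
    qed
  qed
  have X'01: "X' a x \<in> {0..1}" for a x
  proof -
    have "Y a (restrict x (Ks a)) \<in> {0, 1}" unfolding Y_def by (rule factor_value_01[OF f01])
    then show ?thesis unfolding X'_def by auto
  qed
  define \<mu> where "\<mu> = (\<Sum>a\<in>Cj. P.expectation (X' a))"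
  interpret H: Hoeffding_ineq "Om \<delta> n" Cj X' "\<lambda>_. 0" "\<lambda>_. 1" \<mu>
  proof unfold_locales
    show "finite Cj" by fact
    show "P.indep_vars (\<lambda>_. borel) X' Cj" by fact
    fix a assume "a \<in> Cj" show "AE x in Om \<delta> n. X' a x \<in> {0..1}" using X'01 by simp
  qed (simp add: \<mu>_def)
  have cardpos: "(\<Sum>a\<in>Cj. (1 - 0 :: real)\<^sup>2) > 0" using False finC by (simp add: card_gt_0_iff)
  have hoeff: "P.prob {x\<in>space (Om \<delta> n). \<bar>(\<Sum>a\<in>Cj. X' a x) - \<mu>\<bar> \<ge> \<epsilon>}
      \<le> 2 * exp (-2 * \<epsilon>\<^sup>2 / (\<Sum>a\<in>Cj. (1 - 0)\<^sup>2))"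
    using H.Hoeffding_ineq_abs_ge[OF _ cardpos, of \<epsilon>] eps by simp
  have esum: "e a = P.expectation (X' a)" if "a \<in> Cj" for a
  proof -
    have "e a = P.expectation (X a)" using e[of a] unfolding X_def[abs_def] by simp
    also have "X a = X' a" by (rule ext) (rule eqX[OF that, symmetric])
    then have "P.expectation (X a) = P.expectation (X' a)" by simp
    finally show ?thesis .
  qed
  have seteq: "{x\<in>space (Om \<delta> n). \<epsilon> \<le> \<bar>\<Sum>a\<in>Cj. (factor_value r f m edge d Fto F L (Psi n x) a - e a)\<bar>}
      = {x\<in>space (Om \<delta> n). \<bar>(\<Sum>a\<in>Cj. X' a x) - \<mu>\<bar> \<ge> \<epsilon>}"
  proof -
    have "(\<Sum>a\<in>Cj. (factor_value r f m edge d Fto F L (Psi n x) a - e a)) = (\<Sum>a\<in>Cj. X' a x) - \<mu>" for x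
      unfolding \<mu>_def sum_subtractf[symmetric]
      by (intro sum.cong refl) (simp add: eqX esum X_def)
    then show ?thesis by simp
  qed
  have "card Cj \<le> m" using Cm card_mono[of "{..<m}" Cj] by simp
  then have cle: "real (card Cj) \<le> real m" by simp
  have cpos: "0 < real (card Cj)" using False finC by (simp add: card_gt_0_iff)
  have "exp (-2 * \<epsilon>\<^sup>2 / (\<Sum>a\<in>Cj. (1 - 0 :: real)\<^sup>2)) = exp (-2 * \<epsilon>\<^sup>2 / real (card Cj))" by simp
  also have "\<dots> \<le> exp (-2 * \<epsilon>\<^sup>2 / real m)"
  proof -
    have "2 * \<epsilon>\<^sup>2 / real m \<le> 2 * \<epsilon>\<^sup>2 / real (card Cj)"
      using cle cpos by (intro divide_left_mono) auto
    then show ?thesis by simp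
  qed
  finally have ex: "exp (-2 * \<epsilon>\<^sup>2 / (\<Sum>a\<in>Cj. (1 - 0 :: real)\<^sup>2)) \<le> exp (-2 * \<epsilon>\<^sup>2 / real m)" .
  show ?thesis unfolding seteq using hoeff ex by linarith
qed



lemma fvM_alg:
  fixes f :: "(nat \<Rightarrow> real) \<Rightarrow> real"
  assumes FtoM: "\<And>k. k < L \<Longrightarrow> Fto k \<in> borel_measurable (PiM {..<k} (\<lambda>_. borel))"
    and FM: "\<And>k. k < L \<Longrightarrow> F k \<in> borel_measurable (PiM {..<k} (\<lambda>_. borel))"
  shows "(\<lambda>\<omega>. factor_value r f m edge d Fto F L \<omega> a) \<in> borel_measurable (alg_space \<delta> n)"
proof -
  have Z: "(\<lambda>\<omega>. fst \<omega> x) \<in> borel_measurable (alg_space \<delta> n)" for x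
  proof -
    have "(\<lambda>y. y x) \<in> borel_measurable (PiM {..<n} (\<lambda>_. Nm \<delta>))"
      by (rule coord_measurable) (simp add: sets_Nm)
    then have "(\<lambda>\<omega>. fst \<omega> x) \<in> borel_measurable (PiM {..<n} (\<lambda>_. Nm \<delta>) \<Otimes>\<^sub>M PiM {..<n} (\<lambda>_. Um))"
      using measurable_compose[OF measurable_fst] by blast
    then show ?thesis by (simp add: alg_space_eq)
  qed
  have U: "(\<lambda>\<omega>. snd \<omega> x) \<in> borel_measurable (alg_space \<delta> n)" for x
  proof -
    have "(\<lambda>y. y x) \<in> borel_measurable (PiM {..<n} (\<lambda>_. Um))"
      by (rule coord_measurable) (simp add: sets_Um)
    then have "(\<lambda>\<omega>. snd \<omega> x) \<in> borel_measurable (PiM {..<n} (\<lambda>_. Nm \<delta>) \<Otimes>\<^sub>M PiM {..<n} (\<lambda>_. Um))"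
      using measurable_compose[OF measurable_snd] by blast
    then show ?thesis by (simp add: alg_space_eq)
  qed
  show ?thesis using factor_value_measurable[where P="\<lambda>\<omega>. \<omega>", OF Z U FtoM FM] by simp
qed

lemma core:
  fixes f :: "(nat \<Rightarrow> real) \<Rightarrow> real" and t \<delta> :: real
  assumes f01: "\<forall>x\<in>pm_cube r. f x \<in> {0, 1}" and r: "0 < r" and d: "0 < \<delta>"
    and FtoM: "\<And>k. k < L \<Longrightarrow> Fto k \<in> borel_measurable (PiM {..<k} (\<lambda>_. borel))"
    and FM: "\<And>k. k < L \<Longrightarrow> F k \<in> borel_measurable (PiM {..<k} (\<lambda>_. borel))"
    and reg: "index_regular r d n m edge" and t: "0 < t" and m: "0 < m"
    and K: "K = (1 + d * r) ^ (Suc (Suc L) + Suc (Suc L)) * (d div r) + 1"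
  shows "measure (alg_space \<delta> n)
           {\<omega> \<in> space (alg_space \<delta> n). t * real m \<le> \<bar>\<Sum>a<m. factor_value r f m edge d Fto F L \<omega> a
               - (\<integral>\<omega>'. factor_value r f m edge d Fto F L \<omega>' a \<partial>alg_space \<delta> n)\<bar>}
         \<le> 2 * real K * exp (- 2 * t\<^sup>2 * real m / (real K)\<^sup>2)"
proof -
  define fv where "fv a \<omega> = factor_value r f m edge d Fto F L \<omega> a" for a \<omega>
  define e where "e a = (\<integral>\<omega>'. fv a \<omega>' \<partial>alg_space \<delta> n)" for a
  define R where "R = Suc (Suc L)"
  define D where "D a = fball r m edge R (edge a 0)" for a
  have nq: "m = n * (d div r)" by (rule m_eq[OF reg r])
  have n: "0 < n" using m nq by (cases n) auto
  interpret P: prob_space "Om \<delta> n" using prob_Om[OF d] .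
  have fvM: "fv a \<in> borel_measurable (alg_space \<delta> n)" for a
    unfolding fv_def using fvM_alg[OF FtoM FM] .
  have XM: "(\<lambda>x. fv a (Psi n x)) \<in> borel_measurable (Om \<delta> n)" for a
    using measurable_compose[OF Psi_measurable fvM] .
  have e': "e a = integral\<^sup>L (Om \<delta> n) (\<lambda>x. factor_value r f m edge d Fto F L (Psi n x) a)" for a
  proof -
    have "e a = integral\<^sup>L (distr (Om \<delta> n) (alg_space \<delta> n) (Psi n)) (fv a)"
      unfolding e_def by (rule arg_cong[where f="\<lambda>M. integral\<^sup>L M (fv a)"]) (rule alg_space_distr[OF d])
    also have "\<dots> = integral\<^sup>L (Om \<delta> n) (\<lambda>x. fv a (Psi n x))"
      by (rule integral_distr[OF Psi_measurable fvM])
    finally show ?thesis by (simp add: fv_def)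
  qed
  define S where "S = {\<omega> \<in> space (alg_space \<delta> n). t * real m \<le> \<bar>\<Sum>a<m. fv a \<omega> - e a\<bar>}"
  have gM: "(\<lambda>\<omega>. \<bar>\<Sum>a<m. fv a \<omega> - e a\<bar>) \<in> borel_measurable (alg_space \<delta> n)"
    by (intro borel_measurable_abs borel_measurable_sum borel_measurable_diff measurable_const fvM) auto
  have Smeas: "S \<in> sets (alg_space \<delta> n)"
    unfolding S_def by (rule borel_measurable_le[OF measurable_const gM]) simp
  have "measure (alg_space \<delta> n) S = measure (distr (Om \<delta> n) (alg_space \<delta> n) (Psi n)) S"
    by (rule arg_cong[where f="\<lambda>M. measure M S"]) (rule alg_space_distr[OF d])
  also have "\<dots> = measure (Om \<delta> n) (Psi n -` S \<inter> space (Om \<delta> n))"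
    by (rule measure_distr[OF Psi_measurable Smeas])
  also have "Psi n -` S \<inter> space (Om \<delta> n) =
      {x\<in>space (Om \<delta> n). t * real m \<le> \<bar>\<Sum>a<m. (fv a (Psi n x) - e a)\<bar>}"
    unfolding S_def using measurable_space[OF Psi_measurable] by auto
  finally have meq: "measure (alg_space \<delta> n) S =
      measure (Om \<delta> n) {x\<in>space (Om \<delta> n). t * real m \<le> \<bar>\<Sum>a<m. (fv a (Psi n x) - e a)\<bar>}" .
  define c where "c a a' = (D a \<inter> D a' \<noteq> {})" for a a'
  have Kpos: "0 < K" using K by simp
  have deg: "card {y\<in>{..<m}. y \<noteq> a \<and> c a y} < K" if a: "a \<in> {..<m}" for a
  proof -
    have sub: "{y\<in>{..<m}. y \<noteq> a \<and> c a y} \<subseteq> (\<Union>u\<in>fball r m edge (R + R) (edge a 0). {a'. a' < m \<and> edge a' 0 = u})"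
    proof
      fix y assume y: "y \<in> {y\<in>{..<m}. y \<noteq> a \<and> c a y}"
      then obtain u where u: "u \<in> D a" "u \<in> D y" by (auto simp: c_def)
      then have "edge y 0 \<in> fball r m edge (R + R) (edge a 0)"
        unfolding D_def by (rule ball_meet)
      then show "y \<in> (\<Union>u\<in>fball r m edge (R + R) (edge a 0). {a'. a' < m \<and> edge a' 0 = u})"
        using y by auto
    qed
    have "card {y\<in>{..<m}. y \<noteq> a \<and> c a y} \<le> card (\<Union>u\<in>fball r m edge (R + R) (edge a 0). {a'. a' < m \<and> edge a' 0 = u})"
      by (rule card_mono[OF _ sub]) (auto intro: fball_finite)
    also have "\<dots> \<le> (\<Sum>u\<in>fball r m edge (R + R) (edge a 0). card {a'. a' < m \<and> edge a' 0 = u})"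
      by (rule card_UN_le[OF fball_finite])
    also have "\<dots> \<le> (\<Sum>u\<in>fball r m edge (R + R) (edge a 0). d div r)"
      by (intro sum_mono fiber_card_le[OF reg r])
    also have "\<dots> = card (fball r m edge (R + R) (edge a 0)) * (d div r)" by simp
    also have "\<dots> \<le> (1 + d * r) ^ (R + R) * (d div r)"
      by (intro mult_right_mono card_fball_le[OF reg]) simp
    also have "\<dots> < K" using K by (simp add: R_def)
    finally show ?thesis .
  qed
  have csym: "c x y \<Longrightarrow> c y x" for x y by (auto simp: c_def)
  obtain col where col: "\<forall>x\<in>{..<m}. col x < K"
      "\<forall>x\<in>{..<m}. \<forall>y\<in>{..<m}. x \<noteq> y \<and> c x y \<longrightarrow> col x \<noteq> col y"
    using greedy_coloring[of "{..<m}" c K, OF _ csym deg] by blast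
  have eps: "0 < t * real m" using t m by simp
  have "measure (Om \<delta> n) {x\<in>space (Om \<delta> n). t * real m \<le> \<bar>\<Sum>a<m. (fv a (Psi n x) - e a)\<bar>}
      \<le> real K * (2 * exp (- 2 * (t * real m / real K)\<^sup>2 / real m))"
  proof (rule P.class_union_bound[where col=col])
    show "\<And>a. a < m \<Longrightarrow> (\<lambda>x. fv a (Psi n x)) \<in> borel_measurable (Om \<delta> n)" using XM by blast
    show "0 < K" by fact
    show "\<And>a. a < m \<Longrightarrow> col a < K" using col by auto
    show "0 < t * real m" by fact
  next
    fix j assume j: "j < K"
    have "measure (Om \<delta> n) {x\<in>space (Om \<delta> n). t * real m / real K \<le>
           \<bar>\<Sum>a\<in>{a. a < m \<and> col a = j}. (factor_value r f m edge d Fto F L (Psi n x) a - e a)\<bar>}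
          \<le> 2 * exp (- 2 * (t * real m / real K)\<^sup>2 / real m)"
    proof (rule class_bound[OF f01 r d n FtoM FM])
      show "{a. a < m \<and> col a = j} \<subseteq> {..<m}" by auto
      show "0 < t * real m / real K" using eps Kpos by simp
      show "\<And>a. e a = integral\<^sup>L (Om \<delta> n) (\<lambda>x. factor_value r f m edge d Fto F L (Psi n x) a)" by (rule e')
      fix a a' assume aa: "a \<in> {a. a < m \<and> col a = j}" "a' \<in> {a. a < m \<and> col a = j}" "a \<noteq> a'"
      have am: "a \<in> {..<m}" "a' \<in> {..<m}" and ceq: "col a = col a'" using aa(1,2) by auto
      have "\<not> c a a'"
      proof
        assume "c a a'"
        then have "col a \<noteq> col a'" using col(2) am aa(3) by blast
        then show False using ceq by simp
      qed
      then show "fball r m edge (Suc (Suc L)) (edge a 0) \<inter> fball r m edge (Suc (Suc L)) (edge a' 0) = {}"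
        by (simp add: c_def D_def R_def)
    qed
    then show "measure (Om \<delta> n) {x\<in>space (Om \<delta> n). t * real m / real K \<le>
           \<bar>\<Sum>a\<in>{a. a < m \<and> col a = j}. (fv a (Psi n x) - e a)\<bar>}
          \<le> 2 * exp (- 2 * (t * real m / real K)\<^sup>2 / real m)" by (simp add: fv_def)
  qed
  also have "real K * (2 * exp (- 2 * (t * real m / real K)\<^sup>2 / real m)) = 2 * real K * exp (- 2 * t\<^sup>2 * real m / (real K)\<^sup>2)"
    using m Kpos by (simp add: power2_eq_square field_simps)
  finally have "measure (alg_space \<delta> n) S \<le> 2 * real K * exp (- 2 * t\<^sup>2 * real m / (real K)\<^sup>2)"
    using meq by simp
  then show ?thesis by (simp add: S_def fv_def e_def)
qed



lemma final_arith:
  fixes K m n t C :: real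
  assumes K: "1 \<le> K" and nm: "n \<le> m" and n: "0 \<le> n" and C: "C = 2 * K + K\<^sup>2"
  shows "2 * K * exp (- 2 * t\<^sup>2 * m / K\<^sup>2) \<le> C * exp (- (n * t\<^sup>2) / (2 * C))"
proof -
  have K2: "0 < K\<^sup>2" using K by simp
  have KC: "K\<^sup>2 \<le> C" using C K by simp
  have Cpos: "0 < C" using K2 KC by linarith
  have t2: "0 \<le> t\<^sup>2" by simp
  have "n * t\<^sup>2 / (2 * C) \<le> n * t\<^sup>2 / (2 * K\<^sup>2)"
    by (intro divide_left_mono mult_nonneg_nonneg) (use K2 KC n t2 Cpos in auto)
  also have "\<dots> \<le> m * t\<^sup>2 / (2 * K\<^sup>2)"
    using K2 nm t2 by (intro divide_right_mono mult_right_mono) auto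
  also have "\<dots> \<le> 2 * t\<^sup>2 * m / K\<^sup>2"
    using K2 nm n t2 by (simp add: field_simps)
  finally have "- 2 * t\<^sup>2 * m / K\<^sup>2 \<le> - (n * t\<^sup>2) / (2 * C)" by simp
  then have e: "exp (- 2 * t\<^sup>2 * m / K\<^sup>2) \<le> exp (- (n * t\<^sup>2) / (2 * C))" by simp
  have "2 * K \<le> C" using C by simp
  then show ?thesis using e K by (intro mult_mono) auto
qed

theorem mainTheorem18:
  fixes r d :: nat and f :: "(nat \<Rightarrow> real) \<Rightarrow> real" and \<delta> K :: real
    and Fto F :: "nat \<Rightarrow> (nat \<Rightarrow> real) \<Rightarrow> real"
  assumes r2: "2 \<le> r"
    and f01: "\<forall>x\<in>pm_cube r. f x \<in> {0, 1}"
    and fdeg1: "\<forall>S. S \<subseteq> {..<r} \<and> card S = 1 \<longrightarrow> fourier_coeff r f S = 0"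
    and delta: "0 < \<delta>"
    and Kpos: "0 < K"
    and Fmeas: "\<forall>l < nat \<lfloor>1 / \<delta>\<rfloor>.
                  Fto l \<in> borel_measurable (PiM {..<l} (\<lambda>_. borel)) \<and>
                  F l \<in> borel_measurable (PiM {..<l} (\<lambda>_. borel))"
    and Fbdd: "\<forall>l < nat \<lfloor>1 / \<delta>\<rfloor>. \<forall>x \<in> PiE {..<l} (\<lambda>_. UNIV).
                  \<bar>Fto l x\<bar> \<le> K \<and> \<bar>F l x\<bar> \<le> K"
  shows "\<exists>C>0. \<forall>n m (edge :: nat \<Rightarrow> nat \<Rightarrow> nat).
           index_regular r d n m edge \<and>
           fg_girth_ge r n m edge (4 * nat \<lfloor>1 / \<delta>\<rfloor> + 4) \<longrightarrow>
           (\<forall>t::real. 0 \<le> t \<longrightarrow>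
              measure (alg_space \<delta> n)
                {\<omega> \<in> space (alg_space \<delta> n).
                   \<bar>(1 / ((real d / real r) * real n)) *
                     (\<Sum>a<m. factor_value r f m edge d Fto F (nat \<lfloor>1 / \<delta>\<rfloor>) \<omega> a
                        - (\<integral>\<omega>'. factor_value r f m edge d Fto F (nat \<lfloor>1 / \<delta>\<rfloor>) \<omega>' a
                              \<partial>alg_space \<delta> n))\<bar> \<ge> t}
              \<le> C * exp (- (real n * t\<^sup>2) / (2 * C)))"
proof -
  define L where "L = nat \<lfloor>1 / \<delta>\<rfloor>"
  define KK :: nat where "KK = (1 + d * r) ^ (Suc (Suc L) + Suc (Suc L)) * (d div r) + 1"
  define C :: real where "C = 2 * real KK + (real KK)\<^sup>2"
  have KK1: "1 \<le> real KK" by (simp add: KK_def)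
  have C1: "1 \<le> C"
  proof -
    have "0 \<le> (real KK)\<^sup>2" by simp
    then show ?thesis using KK1 unfolding C_def by linarith
  qed
  have r: "0 < r" using r2 by simp
  have FtoM: "\<And>k. k < L \<Longrightarrow> Fto k \<in> borel_measurable (PiM {..<k} (\<lambda>_. borel))"
    and FM: "\<And>k. k < L \<Longrightarrow> F k \<in> borel_measurable (PiM {..<k} (\<lambda>_. borel))"
    using Fmeas by (auto simp: L_def)
  have main: "measure (alg_space \<delta> n)
                {\<omega> \<in> space (alg_space \<delta> n).
                   \<bar>(1 / ((real d / real r) * real n)) *
                     (\<Sum>a<m. factor_value r f m edge d Fto F L \<omega> a
                        - (\<integral>\<omega>'. factor_value r f m edge d Fto F L \<omega>' a
                              \<partial>alg_space \<delta> n))\<bar> \<ge> t}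
              \<le> C * exp (- (real n * t\<^sup>2) / (2 * C))"
    if reg: "index_regular r d n m edge" and t0: "0 \<le> t" for n m edge t
  proof -
    interpret A: prob_space "alg_space \<delta> n" using prob_alg[OF delta] .
    let ?S = "{\<omega> \<in> space (alg_space \<delta> n).
                   \<bar>(1 / ((real d / real r) * real n)) *
                     (\<Sum>a<m. factor_value r f m edge d Fto F L \<omega> a
                        - (\<integral>\<omega>'. factor_value r f m edge d Fto F L \<omega>' a
                              \<partial>alg_space \<delta> n))\<bar> \<ge> t}"
    show ?thesis
    proof (cases "t = 0")
      case True
      have "measure (alg_space \<delta> n) ?S \<le> 1" by (rule A.prob_le_1)
      also have "1 \<le> C * exp (- (real n * t\<^sup>2) / (2 * C))" using True C1 by simp
      finally show ?thesis .
    next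
      case False
      then have t: "0 < t" using t0 by simp
      show ?thesis
      proof (cases "m = 0")
        case True
        then have "?S = {}" using t by auto
        then have "measure (alg_space \<delta> n) ?S = 0" by (simp only: measure_empty)
        moreover have "0 \<le> C * exp (- (real n * t\<^sup>2) / (2 * C))" using C1 by simp
        ultimately show ?thesis by linarith
      next
        case False
        then have m: "0 < m" by simp
        have nq: "m = n * (d div r)" by (rule m_eq[OF reg r])
        have dvd: "r dvd d" using reg by (simp add: index_regular_def)
        have qpos: "0 < d div r" using m nq by (cases "d div r") auto
        have alpha: "(real d / real r) * real n = real m"
          using real_of_nat_div[OF dvd] nq by simp
        have "n \<le> m" using nq qpos by simp
        then have nm: "real n \<le> real m" by simp
        have "?S = {\<omega> \<in> space (alg_space \<delta> n). t * real m \<le> \<bar>\<Sum>a<m. factor_value r f m edge d Fto F L \<omega> a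
               - (\<integral>\<omega>'. factor_value r f m edge d Fto F L \<omega>' a \<partial>alg_space \<delta> n)\<bar>}"
        proof -
          have "t \<le> \<bar>1 / real m * s\<bar> \<longleftrightarrow> t * real m \<le> \<bar>s\<bar>" for s :: real
            using m by (simp add: abs_mult pos_le_divide_eq)
          then show ?thesis unfolding alpha by simp
        qed
        also have "measure (alg_space \<delta> n) \<dots> \<le> 2 * real KK * exp (- 2 * t\<^sup>2 * real m / (real KK)\<^sup>2)"
          by (rule core[OF f01 r delta FtoM FM reg t m KK_def])
        also have "\<dots> \<le> C * exp (- (real n * t\<^sup>2) / (2 * C))"
          by (rule final_arith[OF KK1 nm _ C_def]) simp
        finally show ?thesis .
      qed
    qed
  qed
  have Cpos: "0 < C" using C1 by simp
  show ?thesis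
    using Cpos main unfolding L_def by blast
qed


end
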